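(* Let $K$ be a commutative totally ordered quasi-field of characteristic $1$, and let $P,Q\in K[X_1,\dots,X_n]$. Suppose $x\in K^n$ is a zero of $P$ and that there exists a nonzero $R\in K[X_1,\dots,X_n]$ with $RP=RQ$. Then $x$ is also a zero of $Q$.
   Context: A quasi-field of characteristic $1$ (idempotent semifield) is a commutative semiring $K$ (with additive neutral $0$ and unit $1$) such that $1+1=1$ (hence $x+x=x$ for all $x$) and every nonzero element is invertible for multiplication. It is ordered by $a\le b$ iff $a+b=b$; totally ordered means this order is total, so $a+b=\max(a,b)$. A point $x\in K^n$ is a zero of $P\in K[X_1,\dots,X_n]$ if one can write $P=P_1+P_2$ where $P_1,P_2$ have disjoint sets of monomials and $P_1(x)=P_2(x)$; for totally ordered $K$ this means that $P(x)=0$ or that the maximum of the values of the monomials of $P$ at $x$ is attained by at least two distinct monomials. *)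

theory Defs
  imports "HOL-Library.Poly_Mapping"
begin

class quasi_field_char1 = comm_semiring_1 +
  assumes one_plus_one_idem: "1 + 1 = 1"
  assumes mult_inverse_exists: "x \<noteq> 0 \<Longrightarrow> \<exists>y. x * y = 1"

text \<open>Total order: a \<le> b iff a + b = b; totality means a + b \<in> {a, b}.\<close>
definition totally_ordered_qf :: "'a::quasi_field_char1 itself \<Rightarrow> bool" where
  "totally_ordered_qf _ \<longleftrightarrow> (\<forall>a b::'a. a + b = a \<or> a + b = b)"

type_synonym ('n, 'a) mpoly = "('n \<Rightarrow>\<^sub>0 nat) \<Rightarrow>\<^sub>0 'a"

definition mon_eval :: "('n::finite \<Rightarrow>\<^sub>0 nat) \<Rightarrow> ('n \<Rightarrow> 'a::comm_semiring_1) \<Rightarrow> 'a" where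
  "mon_eval m x = (\<Prod>i\<in>UNIV. x i ^ Poly_Mapping.lookup m i)"

definition peval :: "('n::finite, 'a::comm_semiring_1) mpoly \<Rightarrow> ('n \<Rightarrow> 'a) \<Rightarrow> 'a" where
  "peval P x = (\<Sum>m\<in>Poly_Mapping.keys P. Poly_Mapping.lookup P m * mon_eval m x)"

definition is_zero_of :: "('n::finite \<Rightarrow> 'a::comm_semiring_1) \<Rightarrow> ('n, 'a) mpoly \<Rightarrow> bool" where
  "is_zero_of x P \<longleftrightarrow> (\<exists>P1 P2. P = P1 + P2 \<and> Poly_Mapping.keys P1 \<inter> Poly_Mapping.keys P2 = {} \<and> peval P1 x = peval P2 x)"

end

theory Submission
  imports Defs
begin

definition qle :: "'a::quasi_field_char1 \<Rightarrow> 'a \<Rightarrow> bool" where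
  "qle a b \<longleftrightarrow> a + b = b"

lemma q_idem: "(a::'a::quasi_field_char1) + a = a"
  by (metis distrib_left mult_1_right one_plus_one_idem)

lemma qle_refl: "qle (a::'a::quasi_field_char1) a" by (simp add: qle_def q_idem)
lemma qle_trans: "qle (a::'a::quasi_field_char1) b \<Longrightarrow> qle b c \<Longrightarrow> qle a c"
  unfolding qle_def by (metis add.assoc)
lemma qle_antisym: "qle (a::'a::quasi_field_char1) b \<Longrightarrow> qle b a \<Longrightarrow> a = b"
  unfolding qle_def by (metis add.commute)
lemma qle_add: "qle (a::'a::quasi_field_char1) (a + b)"
  unfolding qle_def by (metis add.assoc q_idem)
lemma qle_add2: "qle (b::'a::quasi_field_char1) (a + b)"
  by (metis qle_add add.commute)
lemma qle_zero: "qle 0 (a::'a::quasi_field_char1)" by (simp add: qle_def)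
lemma qle_mult: "qle (a::'a::quasi_field_char1) b \<Longrightarrow> qle (a*c) (b*c)"
  unfolding qle_def by (metis distrib_right)
lemma qle_mult2: "qle (a::'a::quasi_field_char1) b \<Longrightarrow> qle a' b' \<Longrightarrow> qle (a*a') (b*b')"
  by (metis qle_mult qle_trans mult.commute)
lemma q_cancel: "(c::'a::quasi_field_char1) \<noteq> 0 \<Longrightarrow> a * c = b * c \<Longrightarrow> a = b"
proof -
  assume "c \<noteq> 0" "a * c = b * c"
  then obtain y where "c * y = 1" using mult_inverse_exists by blast
  hence "a * c * y = b * c * y" using \<open>a*c = b*c\<close> by simp
  thus "a = b" using \<open>c*y=1\<close> by (simp add: mult.assoc)
qed
lemma q_nzd: "(a::'a::quasi_field_char1) \<noteq> 0 \<Longrightarrow> b \<noteq> 0 \<Longrightarrow> a * b \<noteq> 0"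
  by (metis q_cancel mult_zero_left)
lemma qle_sum: "finite S \<Longrightarrow> i \<in> S \<Longrightarrow> qle (f i) (sum f S :: 'a::quasi_field_char1)"
proof (induction S rule: finite_induct)
  case empty then show ?case by simp
next
  case (insert j S)
  then show ?case by (auto simp: qle_add qle_add2 intro: qle_trans)
qed
lemma sum_qle: "(\<And>i. i \<in> S \<Longrightarrow> qle (f i) c) \<Longrightarrow> qle (sum f S) (c::'a::quasi_field_char1)"
proof (induction S rule: infinite_finite_induct)
  case (infinite A) then show ?case by (simp add: qle_zero)
next
  case empty then show ?case by (simp add: qle_zero)
next
  case (insert j S)
  then show ?case by (simp add: qle_def) (metis add.assoc)
qed
lemma q_sum_zero: "a + b = 0 \<Longrightarrow> (a::'a::quasi_field_char1) = 0"
  by (metis qle_add qle_def add_0_right)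
lemma sum_nz: "finite S \<Longrightarrow> i \<in> S \<Longrightarrow> f i \<noteq> 0 \<Longrightarrow> sum f S \<noteq> (0::'a::quasi_field_char1)"
  by (metis qle_sum qle_def add.commute add_0_right q_sum_zero)
lemma sum_some:
  assumes tot: "\<forall>a b::'a::quasi_field_char1. a + b = a \<or> a + b = b"
  shows "finite S \<Longrightarrow> S \<noteq> {} \<Longrightarrow> \<exists>i\<in>S. sum f S = (f i :: 'a)"
proof (induction S rule: finite_induct)
  case empty then show ?case by simp
next
  case (insert j S)
  show ?case
  proof (cases "S = {}")
    case True then show ?thesis by simp
  next
    case False
    then obtain i where "i \<in> S" "sum f S = f i" using insert by blast
    then show ?thesis using insert tot by (metis insertCI sum.insert)
  qed
qed
lemma qle_total:
  assumes tot: "\<forall>a b::'a::quasi_field_char1. a + b = a \<or> a + b = b"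
  shows "qle a b \<or> qle b (a::'a)"
  using tot unfolding qle_def by (metis add.commute)

lemma lookup_mult_keys:
  fixes f g :: "('n \<Rightarrow>\<^sub>0 nat) \<Rightarrow>\<^sub>0 'a::comm_semiring_1"
  shows "Poly_Mapping.lookup (f * g) k = (\<Sum>p\<in>{p. fst p \<in> Poly_Mapping.keys f \<and> snd p \<in> Poly_Mapping.keys g \<and> fst p + snd p = k}. Poly_Mapping.lookup f (fst p) * Poly_Mapping.lookup g (snd p))"
proof -
  have ff: "finite {a. Poly_Mapping.lookup f a \<noteq> 0}" "finite {b. Poly_Mapping.lookup g b \<noteq> 0}"
  proof -
    have "{a. Poly_Mapping.lookup f a \<noteq> 0} = Poly_Mapping.keys f" "{a. Poly_Mapping.lookup g a \<noteq> 0} = Poly_Mapping.keys g" by (auto simp: in_keys_iff)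
    thus "finite {a. Poly_Mapping.lookup f a \<noteq> 0}" "finite {b. Poly_Mapping.lookup g b \<noteq> 0}" by simp_all
  qed
  have "Poly_Mapping.lookup (f*g) k = prod_fun (Poly_Mapping.lookup f) (Poly_Mapping.lookup g) k"
    by (simp add: times_poly_mapping.rep_eq)
  also have "\<dots> = (\<Sum>(a, b). Poly_Mapping.lookup f a * Poly_Mapping.lookup g b when k = a + b)"
    by (rule prod_fun_unfold_prod[OF ff])
  also have "\<dots> = (\<Sum>p\<in>Poly_Mapping.keys f \<times> Poly_Mapping.keys g. (case p of (a,b) \<Rightarrow> Poly_Mapping.lookup f a * Poly_Mapping.lookup g b when k = a + b))"
    by (rule Sum_any.expand_superset) (auto simp: in_keys_iff)
  also have "\<dots> = (\<Sum>p\<in>{p. fst p \<in> Poly_Mapping.keys f \<and> snd p \<in> Poly_Mapping.keys g \<and> fst p + snd p = k}. Poly_Mapping.lookup f (fst p) * Poly_Mapping.lookup g (snd p))"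
    by (rule sum.mono_neutral_cong_right) (auto simp: when_def split: if_splits)
  finally show ?thesis .
qed


definition DZ :: "('n::finite \<Rightarrow> 'a::quasi_field_char1) \<Rightarrow> ('n \<Rightarrow>\<^sub>0 nat) \<Rightarrow> nat" where
  "DZ x m = (\<Sum>i\<in>{i. x i = 0}. Poly_Mapping.lookup m i)"
definition xp :: "('n::finite \<Rightarrow> 'a::quasi_field_char1) \<Rightarrow> 'n \<Rightarrow> 'a" where
  "xp x = (\<lambda>i. if x i = 0 then 1 else x i)"
definition tm :: "('n::finite \<Rightarrow> 'a::quasi_field_char1) \<Rightarrow> ('n, 'a) mpoly \<Rightarrow> ('n \<Rightarrow>\<^sub>0 nat) \<Rightarrow> 'a" where
  "tm x F m = Poly_Mapping.lookup F m * mon_eval m (xp x)"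

lemma DZ_add: "DZ x (a + b) = DZ x a + DZ x b"
  by (simp add: DZ_def lookup_add sum.distrib)

lemma mon_eval_add: "mon_eval (a + b) y = mon_eval a y * mon_eval b y"
  by (simp add: mon_eval_def lookup_add power_add prod.distrib)

lemma prod_nz: "finite S \<Longrightarrow> (\<And>i. i \<in> S \<Longrightarrow> f i \<noteq> 0) \<Longrightarrow> prod f S \<noteq> (0::'a::quasi_field_char1)"
  by (induction S rule: finite_induct) (auto simp: q_nzd)

lemma pow_nz: "(a::'a::quasi_field_char1) \<noteq> 0 \<Longrightarrow> a ^ k \<noteq> 0"
  by (induction k) (auto simp: q_nzd)

lemma mon_eval_xp_nz: "mon_eval m (xp x) \<noteq> 0"
  unfolding mon_eval_def by (rule prod_nz) (auto simp: xp_def pow_nz)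

lemma mon_eval_x: "mon_eval m x = (if DZ x m = 0 then mon_eval m (xp x) else 0)"
proof (cases "DZ x m = 0")
  case True
  hence "\<forall>i\<in>{i. x i = 0}. Poly_Mapping.lookup m i = 0" unfolding DZ_def by simp
  hence "mon_eval m x = mon_eval m (xp x)" unfolding mon_eval_def
    by (intro prod.cong) (auto simp: xp_def)
  with True show ?thesis by simp
next
  case False
  then obtain i where i: "x i = 0" "Poly_Mapping.lookup m i \<noteq> 0" unfolding DZ_def by auto
  have "mon_eval m x = x i ^ Poly_Mapping.lookup m i * (\<Prod>j\<in>UNIV - {i}. x j ^ Poly_Mapping.lookup m j)"
    unfolding mon_eval_def by (rule prod.remove) auto
  also have "\<dots> = 0" using i by (simp add: zero_power)
  finally show ?thesis using False by simp
qed

lemma tm_nz: "m \<in> Poly_Mapping.keys F \<Longrightarrow> tm x F m \<noteq> 0"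
  by (simp add: tm_def q_nzd mon_eval_xp_nz in_keys_iff)


definition dd :: "('n::finite \<Rightarrow> 'a::quasi_field_char1) \<Rightarrow> ('n, 'a) mpoly \<Rightarrow> nat" where
  "dd x F = Min (DZ x ` Poly_Mapping.keys F)"
definition MM :: "('n::finite \<Rightarrow> 'a::quasi_field_char1) \<Rightarrow> ('n, 'a) mpoly \<Rightarrow> 'a" where
  "MM x F = (\<Sum>m\<in>{m\<in>Poly_Mapping.keys F. DZ x m = dd x F}. tm x F m)"
definition TT :: "('n::finite \<Rightarrow> 'a::quasi_field_char1) \<Rightarrow> ('n, 'a) mpoly \<Rightarrow> ('n \<Rightarrow>\<^sub>0 nat) set" where
  "TT x F = {m\<in>Poly_Mapping.keys F. DZ x m = dd x F \<and> tm x F m = MM x F}"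

lemma dd_le: "m \<in> Poly_Mapping.keys F \<Longrightarrow> dd x F \<le> DZ x m"
  unfolding dd_def by (rule Min_le) auto

lemma dd_ex: "F \<noteq> 0 \<Longrightarrow> \<exists>m\<in>Poly_Mapping.keys F. DZ x m = dd x F"
proof -
  assume "F \<noteq> 0"
  hence "Poly_Mapping.keys F \<noteq> {}" by simp
  hence "dd x F \<in> DZ x ` Poly_Mapping.keys F" unfolding dd_def by (intro Min_in) auto
  thus ?thesis by auto
qed

lemma MM_nz: "F \<noteq> 0 \<Longrightarrow> MM x F \<noteq> 0"
proof -
  assume "F \<noteq> 0"
  then obtain m where m: "m \<in> Poly_Mapping.keys F" "DZ x m = dd x F" using dd_ex by blast
  have fin: "finite {m\<in>Poly_Mapping.keys F. DZ x m = dd x F}" by simp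
  show ?thesis unfolding MM_def
    by (rule sum_nz[OF fin, of m]) (use m tm_nz in auto)
qed

lemma tm_le_MM: "m \<in> Poly_Mapping.keys F \<Longrightarrow> DZ x m = dd x F \<Longrightarrow> qle (tm x F m) (MM x F)"
  unfolding MM_def by (rule qle_sum) auto

lemma TT_ne:
  assumes tot: "\<forall>a b::'a::quasi_field_char1. a + b = a \<or> a + b = b"
  shows "(F::('n::finite,'a) mpoly) \<noteq> 0 \<Longrightarrow> TT x F \<noteq> {}"
proof -
  assume "F \<noteq> 0"
  then obtain m0 where "m0\<in>Poly_Mapping.keys F" "DZ x m0 = dd x F" using dd_ex by blast
  hence ne: "{m\<in>Poly_Mapping.keys F. DZ x m = dd x F} \<noteq> {}" by blast
  have fin: "finite {m\<in>Poly_Mapping.keys F. DZ x m = dd x F}" by simp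
  obtain m where "m \<in> {m\<in>Poly_Mapping.keys F. DZ x m = dd x F}" "MM x F = tm x F m"
    using sum_some[OF tot fin ne, of "tm x F"] unfolding MM_def by blast
  thus ?thesis unfolding TT_def by auto
qed

lemma TT_keys: "TT x F \<subseteq> Poly_Mapping.keys F" unfolding TT_def by auto
lemma TT_finite: "finite (TT x F)" by (rule finite_subset[OF TT_keys]) simp

lemma qle_prod_eq:
  fixes a A b B :: "'a::quasi_field_char1"
  assumes "qle a A" "qle b B" "A \<noteq> 0" "B \<noteq> 0" "a * b = A * B"
  shows "a = A \<and> b = B"
proof -
  have 1: "qle (a*b) (A*b)" using assms(1) by (rule qle_mult)
  have 2: "qle (A*b) (A*B)" using qle_mult[OF assms(2), of A] by (simp add: mult.commute)
  have "A*b = A*B" using 1 2 assms(5) qle_antisym by metis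
  hence "b = B" using q_cancel[OF assms(3), of b B] by (simp add: mult.commute)
  moreover have "a = A" using assms(5) q_cancel[OF assms(4), of a A] calculation by simp
  ultimately show ?thesis by simp
qed

definition pairs :: "('n, 'a::quasi_field_char1) mpoly \<Rightarrow> ('n, 'a) mpoly \<Rightarrow> ('n \<Rightarrow>\<^sub>0 nat) \<Rightarrow> (('n \<Rightarrow>\<^sub>0 nat) \<times> ('n \<Rightarrow>\<^sub>0 nat)) set" where
  "pairs F G k = {p. fst p \<in> Poly_Mapping.keys F \<and> snd p \<in> Poly_Mapping.keys G \<and> fst p + snd p = k}"

lemma pairs_finite: "finite (pairs F G k)"
proof -
  have "pairs F G k \<subseteq> Poly_Mapping.keys F \<times> Poly_Mapping.keys G" unfolding pairs_def by auto
  thus ?thesis by (rule finite_subset) simp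
qed

lemma tm_mult: "tm x (F*G) k = (\<Sum>p\<in>pairs F G k. tm x F (fst p) * tm x G (snd p))"
proof -
  have "tm x (F*G) k = (\<Sum>p\<in>pairs F G k. Poly_Mapping.lookup F (fst p) * Poly_Mapping.lookup G (snd p)) * mon_eval k (xp x)"
    unfolding tm_def pairs_def by (simp add: lookup_mult_keys)
  also have "\<dots> = (\<Sum>p\<in>pairs F G k. Poly_Mapping.lookup F (fst p) * Poly_Mapping.lookup G (snd p) * mon_eval k (xp x))"
    by (rule sum_distrib_right)
  also have "\<dots> = (\<Sum>p\<in>pairs F G k. tm x F (fst p) * tm x G (snd p))"
    by (rule sum.cong) (auto simp: pairs_def tm_def mon_eval_add mult_ac)
  finally show ?thesis .
qed

lemma keys_mult_dd:
  assumes "m \<in> Poly_Mapping.keys (F*G)"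
  shows "dd x F + dd x G \<le> DZ x m"
proof -
  have "Poly_Mapping.lookup (F*G) m \<noteq> 0" using assms by (simp add: in_keys_iff)
  moreover have "Poly_Mapping.lookup (F*G) m = (\<Sum>p\<in>pairs F G m. Poly_Mapping.lookup F (fst p) * Poly_Mapping.lookup G (snd p))"
    by (simp add: lookup_mult_keys pairs_def)
  ultimately have "pairs F G m \<noteq> {}" by (metis sum.empty)
  then obtain a b where "a \<in> Poly_Mapping.keys F" "b \<in> Poly_Mapping.keys G" "a + b = m"
    unfolding pairs_def by auto
  thus ?thesis using dd_le[of a F x] dd_le[of b G x] DZ_add[of x a b] by simp
qed

lemma pair_tight:
  assumes "p \<in> pairs F G m" "DZ x m = dd x F + dd x G"
  shows "DZ x (fst p) = dd x F \<and> DZ x (snd p) = dd x G"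
  using assms dd_le[of "fst p" F x] dd_le[of "snd p" G x] DZ_add[of x "fst p" "snd p"]
  unfolding pairs_def by auto

lemma tm_mult_bound:
  assumes "DZ x m = dd x F + dd x G"
  shows "qle (tm x (F*G) m) (MM x F * MM x G)"
  unfolding tm_mult
proof (rule sum_qle)
  fix p assume p: "p \<in> pairs F G m"
  from pair_tight[OF p assms] p show "qle (tm x F (fst p) * tm x G (snd p)) (MM x F * MM x G)"
    by (intro qle_mult2 tm_le_MM) (auto simp: pairs_def)
qed

lemma tm_mult_top:
  assumes "a \<in> TT x F" "b \<in> TT x G"
  shows "tm x (F*G) (a+b) = MM x F * MM x G"
proof (rule qle_antisym)
  show "qle (tm x (F*G) (a+b)) (MM x F * MM x G)"
    using assms by (intro tm_mult_bound) (auto simp: TT_def DZ_add)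
  have "(a,b) \<in> pairs F G (a+b)" using assms unfolding pairs_def TT_def by auto
  from qle_sum[OF pairs_finite this, of "\<lambda>p. tm x F (fst p) * tm x G (snd p)"]
  show "qle (MM x F * MM x G) (tm x (F*G) (a+b))"
    using assms unfolding tm_mult TT_def by auto
qed

lemma top_in_keys:
  assumes "F \<noteq> 0" "G \<noteq> 0" "a \<in> TT x F" "b \<in> TT x G"
  shows "a + b \<in> Poly_Mapping.keys (F*G)"
proof -
  have "tm x (F*G) (a+b) \<noteq> 0" using tm_mult_top[OF assms(3,4)] MM_nz assms(1,2) q_nzd by metis
  thus ?thesis by (auto simp: tm_def in_keys_iff)
qed

lemma tm_mult_attain:
  assumes tot: "\<forall>a b::'a::quasi_field_char1. a + b = a \<or> a + b = b"
  and nz: "(F::('n::finite,'a) mpoly) \<noteq> 0" "G \<noteq> 0"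
  and d: "DZ x m = dd x F + dd x G"
  and eq: "tm x (F*G) m = MM x F * MM x G"
  shows "\<exists>a\<in>TT x F. \<exists>b\<in>TT x G. m = a + b"
proof -
  have nzp: "MM x F * MM x G \<noteq> 0" using nz MM_nz q_nzd by metis
  hence ne: "pairs F G m \<noteq> {}" using eq unfolding tm_mult by (metis sum.empty)
  then obtain p where p: "p \<in> pairs F G m" and pe: "tm x (F*G) m = tm x F (fst p) * tm x G (snd p)"
    using sum_some[OF tot pairs_finite ne, of "\<lambda>p. tm x F (fst p) * tm x G (snd p)"] unfolding tm_mult by blast
  have t: "DZ x (fst p) = dd x F \<and> DZ x (snd p) = dd x G" by (rule pair_tight[OF p d])
  have "tm x F (fst p) = MM x F \<and> tm x G (snd p) = MM x G"
    apply (rule qle_prod_eq)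
    using p t eq pe nz MM_nz by (auto simp: pairs_def intro: tm_le_MM)
  hence "fst p \<in> TT x F" "snd p \<in> TT x G" using p t unfolding TT_def pairs_def by auto
  moreover have "m = fst p + snd p" using p unfolding pairs_def by auto
  ultimately show ?thesis by blast
qed


definition ev :: "('n::finite \<Rightarrow> 'a::quasi_field_char1) \<Rightarrow> ('n, 'a) mpoly \<Rightarrow> ('n \<Rightarrow>\<^sub>0 nat) \<Rightarrow> 'a" where
  "ev x F m = Poly_Mapping.lookup F m * mon_eval m x"

lemma peval_ev: "peval F x = (\<Sum>m\<in>Poly_Mapping.keys F. ev x F m)"
  by (simp add: peval_def ev_def)

lemma ev_cases: "ev x F m = (if DZ x m = 0 then tm x F m else 0)"
  by (simp add: ev_def tm_def mon_eval_x)

lemma ev_le: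
  assumes "dd x F = 0" "m \<in> Poly_Mapping.keys F"
  shows "qle (ev x F m) (MM x F)"
proof (cases "DZ x m = 0")
  case True thus ?thesis using assms tm_le_MM[of m F x] by (simp add: ev_cases)
next
  case False thus ?thesis by (simp add: ev_cases qle_zero)
qed

lemma Z1_aux:
  assumes tot: "\<forall>a b::'a::quasi_field_char1. a + b = a \<or> a + b = b"
  and F: "(F::('n::finite,'a) mpoly) = P1 + P2"
  and disj: "Poly_Mapping.keys P1 \<inter> Poly_Mapping.keys P2 = {}"
  and t1: "t \<in> Poly_Mapping.keys P1" and tT: "t \<in> TT x F"
  and d0: "dd x F = 0" and uniq: "\<forall>t'\<in>TT x F. t' = t"
  shows "peval P1 x \<noteq> peval P2 x"
proof -
  have l1: "Poly_Mapping.lookup F m = Poly_Mapping.lookup P1 m" if "m \<in> Poly_Mapping.keys P1" for m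
    using that disj F by (metis IntI add_0_right empty_iff in_keys_iff lookup_add)
  have l2: "Poly_Mapping.lookup F m = Poly_Mapping.lookup P2 m" if "m \<in> Poly_Mapping.keys P2" for m
    using that disj F by (metis IntI add_0_left empty_iff in_keys_iff lookup_add)
  have k1: "m \<in> Poly_Mapping.keys F" if "m \<in> Poly_Mapping.keys P1" for m
    using l1[OF that] that by (simp add: in_keys_iff)
  have k2: "m \<in> Poly_Mapping.keys F" if "m \<in> Poly_Mapping.keys P2" for m
    using l2[OF that] that by (simp add: in_keys_iff)
  have Fnz: "F \<noteq> 0" using tT TT_keys by fastforce
  have e1: "ev x P1 m = ev x F m" if "m \<in> Poly_Mapping.keys P1" for m
    using l1[OF that] by (simp add: ev_def)
  have e2: "ev x P2 m = ev x F m" if "m \<in> Poly_Mapping.keys P2" for m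
    using l2[OF that] by (simp add: ev_def)
  have "peval P1 x = MM x F"
  proof (rule qle_antisym)
    show "qle (peval P1 x) (MM x F)" unfolding peval_ev
      by (rule sum_qle) (simp add: e1 ev_le[OF d0] k1)
    have "ev x P1 t = MM x F" using e1[OF t1] tT d0 by (simp add: ev_cases TT_def)
    thus "qle (MM x F) (peval P1 x)" unfolding peval_ev using qle_sum[OF finite_keys t1, of "ev x P1"] by simp
  qed
  moreover have "peval P2 x \<noteq> MM x F"
  proof
    assume eq: "peval P2 x = MM x F"
    have ne: "Poly_Mapping.keys P2 \<noteq> {}" using eq MM_nz[OF Fnz, of x] by (auto simp: peval_ev)
    obtain m where m: "m \<in> Poly_Mapping.keys P2" "peval P2 x = ev x P2 m"
      using sum_some[OF tot finite_keys ne, of "ev x P2"] unfolding peval_ev by blast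
    show False
    proof (cases "DZ x m = 0")
      case True
      hence "tm x F m = MM x F" using m eq e2[OF m(1)] by (simp add: ev_cases)
      hence "m \<in> TT x F" using True d0 k2[OF m(1)] by (simp add: TT_def)
      hence "m = t" using uniq by blast
      thus False using m(1) t1 disj by blast
    next
      case False
      hence "ev x P2 m = 0" using e2[OF m(1)] by (simp add: ev_cases)
      thus False using m eq MM_nz[OF Fnz, of x] by simp
    qed
  qed
  ultimately show ?thesis by simp
qed

lemma Z1:
  assumes tot: "\<forall>a b::'a::quasi_field_char1. a + b = a \<or> a + b = b"
  and z: "is_zero_of x (F::('n::finite,'a) mpoly)"
  and d0: "dd x F = 0" and tT: "t \<in> TT x F"
  shows "\<exists>t'\<in>TT x F. t' \<noteq> t"
proof (rule ccontr)
  assume "\<not> (\<exists>t'\<in>TT x F. t' \<noteq> t)"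
  hence uniq: "\<forall>t'\<in>TT x F. t' = t" by blast
  obtain P1 P2 where F: "F = P1 + P2" and disj: "Poly_Mapping.keys P1 \<inter> Poly_Mapping.keys P2 = {}"
    and eq: "peval P1 x = peval P2 x" using z unfolding is_zero_of_def by blast
  have "t \<in> Poly_Mapping.keys F" using tT TT_keys by blast
  hence "t \<in> Poly_Mapping.keys P1 \<or> t \<in> Poly_Mapping.keys P2"
    using F by (auto simp: in_keys_iff lookup_add)
  thus False
  proof
    assume "t \<in> Poly_Mapping.keys P1"
    from Z1_aux[OF tot F disj this tT d0 uniq] eq show False by simp
  next
    assume "t \<in> Poly_Mapping.keys P2"
    from Z1_aux[OF tot _ _ this tT d0 uniq, of P1] F disj eq show False
      by (simp add: add.commute inf_commute)
  qed
qed

lemma Z2: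
  assumes "(F::('n::finite,'a::quasi_field_char1) mpoly) = 0 \<or> dd x F > 0 \<or> (\<exists>t1\<in>TT x F. \<exists>t2\<in>TT x F. t1 \<noteq> t2)"
  shows "is_zero_of x F"
proof (cases "F = 0")
  case True
  show ?thesis unfolding is_zero_of_def
    by (rule exI[of _ 0], rule exI[of _ 0]) (simp add: True)
next
  case Fnz: False
  show ?thesis
  proof (cases "dd x F > 0")
    case True
    have "peval F x = 0" unfolding peval_ev
    proof (rule sum.neutral, rule ballI)
      fix m assume mk: "m \<in> Poly_Mapping.keys F"
      have "DZ x m \<noteq> 0" using dd_le[OF mk, of x] True by simp
      thus "ev x F m = 0" by (simp add: ev_cases)
    qed
    thus ?thesis unfolding is_zero_of_def
      by (intro exI[of _ F] exI[of _ 0]) (simp add: peval_def)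
  next
    case False
    hence d0: "dd x F = 0" by simp
    then obtain t1 t2 where t: "t1 \<in> TT x F" "t2 \<in> TT x F" "t1 \<noteq> t2" using assms Fnz by auto
    define P2 where "P2 = Poly_Mapping.single t2 (Poly_Mapping.lookup F t2)"
    define P1 where "P1 = Poly_Mapping.update t2 0 F"
    have t2k: "t2 \<in> Poly_Mapping.keys F" using t TT_keys by blast
    have t1k: "t1 \<in> Poly_Mapping.keys F" using t TT_keys by blast
    have kP2: "Poly_Mapping.keys P2 = {t2}" using t2k by (simp add: P2_def in_keys_iff)
    have kP1: "Poly_Mapping.keys P1 = Poly_Mapping.keys F - {t2}" by (simp add: P1_def keys_update)
    have sum: "F = P1 + P2"
      by (rule poly_mapping_eqI) (simp add: P1_def P2_def lookup_add lookup_update lookup_single when_def)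
    have ev1: "ev x P1 m = ev x F m" if "m \<noteq> t2" for m
      using that by (simp add: ev_def P1_def lookup_update)
    have tt: "ev x F t = MM x F" if "t \<in> TT x F" for t
      using that d0 by (simp add: ev_cases TT_def)
    have "peval P2 x = ev x F t2" using kP2 by (simp add: peval_ev ev_def P2_def)
    hence p2: "peval P2 x = MM x F" using tt t by simp
    have p1: "peval P1 x = MM x F"
    proof (rule qle_antisym)
      show "qle (peval P1 x) (MM x F)" unfolding peval_ev
        by (rule sum_qle) (simp add: kP1 ev1 ev_le[OF d0])
      have "t1 \<in> Poly_Mapping.keys P1" using kP1 t t1k by simp
      from qle_sum[OF finite_keys this, of "ev x P1"]
      show "qle (MM x F) (peval P1 x)" unfolding peval_ev using ev1[OF t(3)] tt[OF t(1)] by simp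
    qed
    show ?thesis unfolding is_zero_of_def
      by (intro exI[of _ P1] exI[of _ P2]) (auto simp: sum kP1 kP2 p1 p2)
  qed
qed


lemma shift_eq:
  fixes A :: "('n \<Rightarrow>\<^sub>0 nat) set"
  assumes fin: "finite A" and ne: "A \<noteq> {}" and sub: "(\<lambda>a. a + b) ` A \<subseteq> (\<lambda>a. a + c) ` A"
  shows "b = c"
proof -
  have inj: "inj_on (\<lambda>a. a + d) A" for d :: "'n \<Rightarrow>\<^sub>0 nat" by (rule inj_onI) simp
  have "card ((\<lambda>a. a + b) ` A) = card ((\<lambda>a. a + c) ` A)"
    using card_image[OF inj] by simp
  hence eq: "(\<lambda>a. a + b) ` A = (\<lambda>a. a + c) ` A"
    using card_subset_eq[OF _ sub] fin by simp
  have s: "(\<Sum>y\<in>(\<lambda>a. a + d) ` A. Poly_Mapping.lookup y i) = (\<Sum>a\<in>A. Poly_Mapping.lookup a i) + card A * Poly_Mapping.lookup d i" for d i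
    by (simp add: sum.reindex[OF inj] lookup_add sum.distrib)
  have "card A > 0" using fin ne by (simp add: card_gt_0_iff)
  have "Poly_Mapping.lookup b i = Poly_Mapping.lookup c i" for i
    using s[where d=b and i=i] s[where d=c and i=i] eq \<open>card A > 0\<close> by simp
  thus ?thesis by (rule poly_mapping_eqI)
qed

theorem proposition2p6:
  fixes P Q :: "('n::finite, 'a::quasi_field_char1) mpoly" and x :: "'n \<Rightarrow> 'a"
  assumes "totally_ordered_qf TYPE('a)"
    and "is_zero_of x P"
    and "\<exists>R. R \<noteq> 0 \<and> R * P = R * Q"
  shows "is_zero_of x Q"
proof (rule ccontr)
  assume nz: "\<not> is_zero_of x Q"
  have tot: "\<forall>a b::'a. a + b = a \<or> a + b = b" using assms(1) by (simp add: totally_ordered_qf_def)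
  obtain R where Rnz: "R \<noteq> 0" and RPQ: "R * P = R * Q" using assms(3) by blast
  have Qnz: "Q \<noteq> 0" and dQ: "dd x Q = 0" and uQ: "\<forall>t1\<in>TT x Q. \<forall>t2\<in>TT x Q. t1 = t2"
  proof -
    have "\<not> (Q = 0 \<or> dd x Q > 0 \<or> (\<exists>t1\<in>TT x Q. \<exists>t2\<in>TT x Q. t1 \<noteq> t2))"
      using Z2[of Q x] nz by blast
    thus "Q \<noteq> 0" "dd x Q = 0" "\<forall>t1\<in>TT x Q. \<forall>t2\<in>TT x Q. t1 = t2" by auto
  qed
  obtain q0 where q0: "q0 \<in> TT x Q" using TT_ne[OF tot Qnz] by blast
  obtain a0 where a0: "a0 \<in> TT x R" using TT_ne[OF tot Rnz] by blast
  have kq: "a0 + q0 \<in> Poly_Mapping.keys (R * P)" using top_in_keys[OF Rnz Qnz a0 q0] RPQ by simp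
  have Pnz: "P \<noteq> 0" using kq by auto
  have DZa0: "DZ x a0 = dd x R" using a0 by (simp add: TT_def)
  have DZq0: "DZ x q0 = 0" using q0 dQ by (simp add: TT_def)
  have dP: "dd x P = 0" using keys_mult_dd[OF kq, of x] DZa0 DZq0 by (simp add: DZ_add)
  obtain b1 where b1: "b1 \<in> TT x P" using TT_ne[OF tot Pnz] by blast
  obtain b2 where b2: "b2 \<in> TT x P" "b2 \<noteq> b1" using Z1[OF tot assms(2) dP b1] by blast
  have DZb: "DZ x b = 0" if "b \<in> TT x P" for b using that dP by (simp add: TT_def)
  have E1: "qle (MM x R * MM x P) (MM x R * MM x Q)"
  proof -
    have "tm x (R*P) (a0+b1) = MM x R * MM x P" by (rule tm_mult_top[OF a0 b1])
    moreover have "qle (tm x (R*Q) (a0+b1)) (MM x R * MM x Q)"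
      by (rule tm_mult_bound) (simp add: DZ_add DZa0 DZb[OF b1] dQ)
    ultimately show ?thesis using RPQ by simp
  qed
  have E2: "qle (MM x R * MM x Q) (MM x R * MM x P)"
  proof -
    have "tm x (R*Q) (a0+q0) = MM x R * MM x Q" by (rule tm_mult_top[OF a0 q0])
    moreover have "qle (tm x (R*P) (a0+q0)) (MM x R * MM x P)"
      by (rule tm_mult_bound) (simp add: DZ_add DZa0 DZq0 dP)
    ultimately show ?thesis using RPQ by simp
  qed
  have EE: "MM x R * MM x P = MM x R * MM x Q" using E1 E2 by (rule qle_antisym)
  have incl: "(\<lambda>a. a + b) ` TT x R \<subseteq> (\<lambda>a. a + q0) ` TT x R" if b: "b \<in> TT x P" for b
  proof
    fix y assume "y \<in> (\<lambda>a. a + b) ` TT x R"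
    then obtain a where a: "a \<in> TT x R" and y: "y = a + b" by blast
    have DZa: "DZ x a = dd x R" using a by (simp add: TT_def)
    have "tm x (R*Q) (a+b) = MM x R * MM x Q" using tm_mult_top[OF a b] RPQ EE by simp
    from tm_mult_attain[OF tot Rnz Qnz _ this]
    obtain a' b' where "a' \<in> TT x R" "b' \<in> TT x Q" "a + b = a' + b'"
      using DZa DZb[OF b] dQ by (auto simp: DZ_add)
    moreover have "b' = q0" using uQ q0 \<open>b' \<in> TT x Q\<close> by blast
    ultimately show "y \<in> (\<lambda>a. a + q0) ` TT x R" using y by auto
  qed
  have ne: "TT x R \<noteq> {}" using a0 by blast
  have "b1 = q0" by (rule shift_eq[OF TT_finite ne incl[OF b1]])
  moreover have "b2 = q0" by (rule shift_eq[OF TT_finite ne incl[OF b2(1)]])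
  ultimately show False using b2(2) by simp
qed

end
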